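(* Let $G\subset \mathrm{SL}(3,\mathbb{C})$ be a finite abelian group of diagonal matrices. Then $$|G| = 1 + 2 j_G + \sum_{i=1}^3 (n_i - 1).$$
   Context: Each $g\in G$ of order $r$ is uniquely written $g=\mathrm{diag}(e^{2\pi\sqrt{-1}a_1/r},e^{2\pi\sqrt{-1}a_2/r},e^{2\pi\sqrt{-1}a_3/r})$ with integers $0\le a_i<r$. Its age is $\mathrm{age}(g)=\frac1r\sum_{i=1}^3 a_i$, which is an integer since $G\subset\mathrm{SL}(3,\mathbb{C})$. $N_g$ denotes the dimension of the fixed subspace of $g$ in $\mathbb{C}^3$. $j_G$ is the number of $g\in G$ with $\mathrm{age}(g)=1$ and $N_g=0$. For $i=1,2,3$, $K_i$ is the maximal subgroup of $G$ fixing the $i$-th coordinate $x_i$ (i.e. elements whose $i$-th diagonal entry is $1$), and $n_i=|K_i|$. *)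

theory Defs
  imports "HOL-Analysis.Analysis"
begin

definition is_diag3 :: "complex^3^3 \<Rightarrow> bool" where
  "is_diag3 g \<longleftrightarrow> (\<forall>i j. i \<noteq> j \<longrightarrow> g $ i $ j = 0)"

definition finite_diag_SL3_group :: "(complex^3^3) set \<Rightarrow> bool" where
  "finite_diag_SL3_group G \<longleftrightarrow>
     finite G \<and> mat 1 \<in> G \<and>
     (\<forall>g\<in>G. is_diag3 g \<and> det g = 1) \<and>
     (\<forall>g\<in>G. \<forall>h\<in>G. g ** h \<in> G) \<and>
     (\<forall>g\<in>G. matrix_inv g \<in> G)"

definition diag_order :: "complex^3^3 \<Rightarrow> nat" where
  "diag_order g = (LEAST r. 0 < r \<and> (\<forall>i. (g $ i $ i) ^ r = 1))"

definition diag_exponent :: "complex^3^3 \<Rightarrow> 3 \<Rightarrow> nat" where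
  "diag_exponent g i = (THE a. a < diag_order g \<and>
      g $ i $ i = exp (2 * of_real pi * \<i> * of_nat a / of_nat (diag_order g)))"

definition age :: "complex^3^3 \<Rightarrow> real" where
  "age g = (\<Sum>i\<in>UNIV. real (diag_exponent g i)) / real (diag_order g)"

text \<open>Dimension of the fixed subspace of a diagonal matrix = number of diagonal entries equal to 1.\<close>
definition fixdim :: "complex^3^3 \<Rightarrow> nat" where
  "fixdim g = card {i. g $ i $ i = 1}"

definition j_G :: "(complex^3^3) set \<Rightarrow> nat" where
  "j_G G = card {g\<in>G. age g = 1 \<and> fixdim g = 0}"

definition K_sub :: "(complex^3^3) set \<Rightarrow> 3 \<Rightarrow> (complex^3^3) set" where
  "K_sub G i = {g\<in>G. g $ i $ i = 1}"

end

theory Submission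
  imports Defs
begin

lemma diag_mult_ii:
  assumes "is_diag3 g" shows "(g ** h)$i$i = g$i$i * h$i$i"
proof -
  have "(g ** h)$i$i = (\<Sum>k\<in>UNIV. g$i$k * h$k$i)" by (simp add: matrix_matrix_mult_def)
  also have "\<dots> = (\<Sum>k\<in>UNIV. if k = i then g$i$i * h$i$i else 0)"
    by (rule sum.cong) (use assms in \<open>auto simp: is_diag3_def\<close>)
  finally show ?thesis by simp
qed

lemma diag_eq:
  assumes "is_diag3 g" "is_diag3 h" "\<And>i. g$i$i = h$i$i" shows "g = h"
proof -
  have "g$i$j = h$i$j" for i j
  proof (cases "i = j")
    case True then show ?thesis using assms(3) by simp
  next
    case False then show ?thesis using assms(1,2) unfolding is_diag3_def by simp
  qed
  then show ?thesis by (simp add: vec_eq_iff)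
qed

lemma prod_UNIV3: "prod f (UNIV::3 set) = f 1 * f 2 * f 3"
  unfolding UNIV_3 by (simp add: ac_simps)

lemma det_diag3:
  assumes "is_diag3 g" shows "det g = g$1$1 * g$2$2 * g$3$3"
proof -
  have "det g = prod (\<lambda>i. g$i$i) UNIV"
    by (rule det_diagonal) (use assms in \<open>simp add: is_diag3_def\<close>)
  then show ?thesis by (simp only: prod_UNIV3)
qed

locale dg = fixes G assumes G: "finite_diag_SL3_group G"
begin

lemma fin: "finite G" and one: "mat 1 \<in> G" and diag: "g \<in> G \<Longrightarrow> is_diag3 g"
  and det1: "g \<in> G \<Longrightarrow> det g = 1" and mul: "g \<in> G \<Longrightarrow> h \<in> G \<Longrightarrow> g ** h \<in> G"
  and inv: "g \<in> G \<Longrightarrow> matrix_inv g \<in> G"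
  using G by (auto simp: finite_diag_SL3_group_def)

lemma prod_entries: "g \<in> G \<Longrightarrow> g$1$1 * g$2$2 * g$3$3 = 1"
  using det_diag3 diag det1 by metis

lemma nz: assumes "g \<in> G" shows "g$i$i \<noteq> 0"
  using prod_entries[OF assms] exhaust_3[of i] by auto

lemma inv_entry: assumes "g \<in> G" shows "(matrix_inv g)$i$i = inverse (g$i$i)"
proof -
  have "invertible g" using det1[OF assms] by (simp add: invertible_det_nz)
  then have "matrix_inv g ** g = mat 1"
    unfolding invertible_def matrix_inv_def by (metis (mono_tags, lifting) someI_ex)
  then have "(matrix_inv g)$i$i * g$i$i = 1"
    using diag_mult_ii[OF diag[OF inv[OF assms]], of g i] by (simp add: mat_def)
  then show ?thesis using nz[OF assms] by (simp add: field_simps)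
qed

lemma ex_order: assumes "g \<in> G" shows "\<exists>r>0. \<forall>i. (g$i$i)^r = 1"
proof -
  define P where "P n = ((\<lambda>x. g ** x) ^^ n) (mat 1)" for n
  have PG: "P n \<in> G" for n by (induction n) (auto simp: P_def one mul assms)
  have Pe: "(P n)$i$i = (g$i$i)^n" for n i
    by (induction n) (auto simp: P_def mat_def diag_mult_ii[OF diag[OF assms]])
  have "\<not> inj P"
  proof
    assume "inj P"
    moreover have "finite (range P)" using PG fin by (meson finite_subset image_subsetI)
    ultimately show False using finite_imageD by fastforce
  qed
  then obtain m n where mn: "m \<noteq> n" "P m = P n" unfolding inj_def by blast
  then obtain a b where ab: "a < b" "P a = P b" by (metis linorder_neqE_nat)
  show ?thesis
  proof (intro exI[of _ "b - a"] conjI allI)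
    show "0 < b - a" using ab by simp
    fix i
    have "(g$i$i)^a * (g$i$i)^(b-a) = (g$i$i)^a * 1"
      using Pe[of a i] Pe[of b i] ab by (simp add: power_add[symmetric])
    then show "(g$i$i)^(b-a) = 1" using nz[OF assms] by simp
  qed
qed

lemma order: assumes "g \<in> G" shows "0 < diag_order g" "(g$i$i)^(diag_order g) = 1"
  using LeastI_ex[OF ex_order[OF assms]] unfolding diag_order_def by auto

abbreviation E :: "nat \<Rightarrow> nat \<Rightarrow> complex" where
  "E a r \<equiv> exp (2 * of_real pi * \<i> * of_nat a / of_nat r)"

lemma E_repr: assumes "0 < r" "z^r = 1" shows "\<exists>!a. a < r \<and> z = E a r"
proof -
  have "z \<in> {z::complex. z^r = 1}" using assms(2) by simp
  then have "z \<in> {E j r | j. j < r}" using complex_roots_unity[of r] assms(1) by simp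
  then obtain a where a: "a < r" "z = E a r" by blast
  show ?thesis
  proof (rule ex1I[of _ a])
    show "a < r \<and> z = E a r" using a by blast
    fix b assume b: "b < r \<and> z = E b r"
    then have "E b r = E a r" using a by simp
    then have "b mod r = a mod r" using complex_root_unity_eq[of r b a] assms(1) by simp
    then show "b = a" using a b by simp
  qed
qed

lemma E_add: "E a r * E b r = E (a + b) r"
proof -
  have "2 * of_real pi * \<i> * of_nat (a + b) / of_nat r
      = 2 * of_real pi * \<i> * of_nat a / of_nat r + 2 * of_real pi * \<i> * of_nat b / of_nat r"
    by (simp only: of_nat_add distrib_left add_divide_distrib)
  then show ?thesis by (simp only: exp_add)
qed

lemma E_one: "0 < r \<Longrightarrow> E a r = 1 \<longleftrightarrow> r dvd a"
  using complex_root_unity_eq_1[of r a] by simp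

lemma expo: assumes "g \<in> G"
  shows "diag_exponent g i < diag_order g \<and> g$i$i = E (diag_exponent g i) (diag_order g)"
  unfolding diag_exponent_def
  by (rule theI'[OF E_repr[OF order[OF assms]]])

lemma expo_unique: assumes "g \<in> G" "a < diag_order g" "g$i$i = E a (diag_order g)"
  shows "diag_exponent g i = a"
  unfolding diag_exponent_def
  by (rule the1_equality[OF E_repr[OF order[OF assms(1)]]]) (use assms(2,3) in blast)

lemma one_iff: assumes "g \<in> G" shows "g$i$i = 1 \<longleftrightarrow> diag_exponent g i = 0"
proof (cases "diag_exponent g i = 0")
  case True
  then show ?thesis using expo[OF assms, of i] by simp
next
  case False
  have lt: "diag_exponent g i < diag_order g" using expo[OF assms] by blast
  then have "\<not> diag_order g dvd diag_exponent g i" using False by (meson nat_dvd_not_less not_gr0)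
  then have "g$i$i \<noteq> 1" using expo[OF assms, of i] E_one[OF order(1)[OF assms]] by simp
  then show ?thesis using False by simp
qed

lemma dvd_sum: assumes "g \<in> G"
  shows "diag_order g dvd (diag_exponent g 1 + diag_exponent g 2 + diag_exponent g 3)"
proof -
  let ?r = "diag_order g" and ?a = "diag_exponent g"
  have e: "g$i$i = E (?a i) ?r" for i using expo[OF assms] by blast
  have "E (?a 1 + ?a 2 + ?a 3) ?r = E (?a 1) ?r * E (?a 2) ?r * E (?a 3) ?r"
    by (simp only: E_add)
  also have "\<dots> = g$1$1 * g$2$2 * g$3$3" by (simp only: e)
  also have "\<dots> = 1" using prod_entries[OF assms] .
  finally show ?thesis using E_one[OF order(1)[OF assms]] by blast
qed

lemma order_inv: assumes "g \<in> G" shows "diag_order (matrix_inv g) = diag_order g"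
proof -
  have "(matrix_inv g $ i $ i)^r = 1 \<longleftrightarrow> (g $ i $ i)^r = 1" for r i
  proof -
    have "(matrix_inv g $ i $ i)^r = inverse ((g $ i $ i)^r)"
      by (simp only: inv_entry[OF assms] power_inverse)
    then show ?thesis by (simp only: inverse_eq_1_iff)
  qed
  then have "\<And>r. (0 < r \<and> (\<forall>i. (matrix_inv g $ i $ i)^r = 1)) \<longleftrightarrow> (0 < r \<and> (\<forall>i. (g $ i $ i)^r = 1))"
    by blast
  then show ?thesis unfolding diag_order_def by (simp only:)
qed

lemma expo_inv: assumes "g \<in> G" "diag_exponent g i \<noteq> 0"
  shows "diag_exponent (matrix_inv g) i = diag_order g - diag_exponent g i"
proof (rule expo_unique)
  let ?r = "diag_order g" and ?a = "diag_exponent g i"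
  show "matrix_inv g \<in> G" using inv assms by blast
  show "?r - ?a < diag_order (matrix_inv g)"
    using order_inv[OF assms(1)] order(1)[OF assms(1)] assms(2) by simp
  have lt: "?a < ?r" using expo[OF assms(1)] by blast
  then have s: "?a + (?r - ?a) = ?r" by simp
  have "E ?r ?r = 1" by (simp only: E_one[OF order(1)[OF assms(1)]] dvd_refl)
  then have "E ?a ?r * E (?r - ?a) ?r = 1"
    by (simp only: E_add s)
  then have "g$i$i * E (?r - ?a) ?r = 1"
    using expo[OF assms(1), of i] by simp
  then have "E (?r - ?a) ?r = inverse (g$i$i)"
    by (simp add: inverse_unique)
  then show "matrix_inv g $ i $ i = E (?r - ?a) (diag_order (matrix_inv g))"
    by (simp only: inv_entry[OF assms(1)] order_inv[OF assms(1)])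
qed

lemma mat1_diag: "is_diag3 (mat 1)" by (simp add: is_diag3_def mat_def)

lemma fixdim0: "fixdim g = 0 \<longleftrightarrow> (\<forall>i. g$i$i \<noteq> 1)"
  unfolding fixdim_def by auto

lemma age_eq: assumes "g \<in> G"
  shows "age g = real (diag_exponent g 1 + diag_exponent g 2 + diag_exponent g 3) / real (diag_order g)"
  unfolding age_def sum_3 by simp

lemma age_cases: assumes "g \<in> G" "fixdim g = 0"
  shows "(age g = 1 \<and> age (matrix_inv g) = 2) \<or> (age g = 2 \<and> age (matrix_inv g) = 1)"
proof -
  let ?r = "diag_order g" and ?a = "diag_exponent g"
  have r: "0 < ?r" using order[OF assms(1)] by blast
  have pos: "?a i \<noteq> 0" for i using assms fixdim0 one_iff by blast
  have lt: "?a i < ?r" for i using expo[OF assms(1)] by blast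
  obtain k where k: "?a 1 + ?a 2 + ?a 3 = ?r * k" using dvd_sum[OF assms(1)] by blast
  have "?r * k < ?r * 3" using k lt[of 1] lt[of 2] lt[of 3] by linarith
  then have "k < 3" by simp
  moreover have "k \<noteq> 0"
  proof
    assume "k = 0"
    then have "?a 1 + ?a 2 + ?a 3 = 0" using k by simp
    then show False using pos[of 1] by simp
  qed
  ultimately have k12: "k = 1 \<or> k = 2" by linarith
  have hi: "diag_exponent (matrix_inv g) i = ?r - ?a i" for i using expo_inv[OF assms(1) pos] .
  have "diag_exponent (matrix_inv g) 1 + diag_exponent (matrix_inv g) 2 + diag_exponent (matrix_inv g) 3
        = ?r * (3 - k)"
    unfolding hi using k lt[of 1] lt[of 2] lt[of 3] by (simp add: diff_mult_distrib2)
  moreover have hG: "matrix_inv g \<in> G" using inv assms by blast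
  ultimately have "age (matrix_inv g) = real (?r * (3 - k)) / real ?r"
    using age_eq[OF hG] order_inv[OF assms(1)] by metis
  then have ah: "age (matrix_inv g) = real (3 - k)" using r by simp
  have ag: "age g = real k" using age_eq[OF assms(1)] k r by simp
  show ?thesis using k12 ag ah by auto
qed

lemma inv_inj: "inj_on matrix_inv G"
proof (rule inj_onI)
  fix g h assume "g \<in> G" "h \<in> G" "matrix_inv g = matrix_inv h"
  then have "g$i$i = h$i$i" for i using inv_entry by (metis inverse_inverse_eq)
  then show "g = h" using diag_eq diag \<open>g \<in> G\<close> \<open>h \<in> G\<close> by blast
qed

lemma inv_fix: assumes "g \<in> G" "fixdim g = 0" shows "fixdim (matrix_inv g) = 0"
proof -
  have "matrix_inv g $ i $ i \<noteq> 1" for i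
  proof -
    have "g $ i $ i \<noteq> 1" using assms(2) fixdim0 by blast
    then show ?thesis by (simp add: inv_entry[OF assms(1)])
  qed
  then show ?thesis using fixdim0 by blast
qed

lemma card_F: "card {g\<in>G. fixdim g = 0} = 2 * j_G G"
proof -
  define A1 where "A1 = {g\<in>G. age g = 1 \<and> fixdim g = 0}"
  define A2 where "A2 = {g\<in>G. age g \<noteq> 1 \<and> fixdim g = 0}"
  have fA: "finite A1" "finite A2" using fin unfolding A1_def A2_def by simp_all
  have sub: "A1 \<subseteq> G" "A2 \<subseteq> G" unfolding A1_def A2_def by blast+
  have im1: "matrix_inv ` A1 \<subseteq> A2"
  proof
    fix h assume "h \<in> matrix_inv ` A1"
    then obtain g where g: "g \<in> A1" "h = matrix_inv g" by blast
    have gG: "g \<in> G" "fixdim g = 0" "age g = 1" using g(1) unfolding A1_def by blast+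
    have "age (matrix_inv g) = 2" using age_cases[OF gG(1,2)] gG(3) by (elim disjE conjE) simp_all
    then have "age h \<noteq> 1" unfolding g(2) by simp
    moreover have "h \<in> G" unfolding g(2) by (rule inv[OF gG(1)])
    moreover have "fixdim h = 0" unfolding g(2) by (rule inv_fix[OF gG(1,2)])
    ultimately show "h \<in> A2" unfolding A2_def by blast
  qed
  have im2: "matrix_inv ` A2 \<subseteq> A1"
  proof
    fix h assume "h \<in> matrix_inv ` A2"
    then obtain g where g: "g \<in> A2" "h = matrix_inv g" by blast
    have gG: "g \<in> G" "fixdim g = 0" "age g \<noteq> 1" using g(1) unfolding A2_def by blast+
    have "age h = 1" unfolding g(2) using age_cases[OF gG(1,2)] gG(3) by (elim disjE conjE) simp_all
    moreover have "h \<in> G" unfolding g(2) by (rule inv[OF gG(1)])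
    moreover have "fixdim h = 0" unfolding g(2) by (rule inv_fix[OF gG(1,2)])
    ultimately show "h \<in> A1" unfolding A1_def by blast
  qed
  have "card A1 \<le> card A2"
    by (rule card_inj_on_le[OF inj_on_subset[OF inv_inj sub(1)] im1 fA(2)])
  moreover have "card A2 \<le> card A1"
    by (rule card_inj_on_le[OF inj_on_subset[OF inv_inj sub(2)] im2 fA(1)])
  ultimately have eq: "card A1 = card A2" by simp
  have un: "{g\<in>G. fixdim g = 0} = A1 \<union> A2" unfolding A1_def A2_def by blast
  have di: "A1 \<inter> A2 = {}" unfolding A1_def A2_def by blast
  have "card {g\<in>G. fixdim g = 0} = card A1 + card A2"
    unfolding un by (rule card_Un_disjoint[OF fA di])
  moreover have "j_G G = card A1" unfolding j_G_def A1_def by simp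
  ultimately show ?thesis using eq by simp
qed

lemma prodU: assumes "g \<in> G" shows "prod (\<lambda>x. g$x$x) UNIV = 1"
proof -
  have "det g = prod (\<lambda>x. g$x$x) UNIV"
    by (rule det_diagonal) (use diag[OF assms] in \<open>simp add: is_diag3_def\<close>)
  then show ?thesis using det1[OF assms] by simp
qed

lemma two_ones: assumes "g \<in> G" "g$i$i = 1" "g$j$j = 1" "i \<noteq> j" shows "g = mat 1"
proof -
  have "g$k$k = 1" for k
  proof (cases "k = i \<or> k = j")
    case True then show ?thesis using assms(2,3) by blast
  next
    case False
    have c: "card {i, j, k} = 3" using False assms(4) by (auto simp: card_insert_if)
    have "{i, j, k} = (UNIV :: 3 set)"
      by (rule card_subset_eq) (use c in simp_all)
    then have "prod (\<lambda>x. g$x$x) {i, j, k} = 1" using prodU[OF assms(1)] by simp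
    moreover have d: "i \<noteq> k" "j \<noteq> k" "i \<noteq> j" using False assms(4) by auto
    ultimately have "g$i$i * (g$j$j * g$k$k) = 1" by (simp add: d)
    then show ?thesis using assms(2,3) by simp
  qed
  then show ?thesis using diag_eq[OF diag[OF assms(1)] mat1_diag] by (simp add: mat_def)
qed

end

theorem proposition1:
  fixes G :: "(complex^3^3) set"
  assumes "finite_diag_SL3_group G"
  shows "int (card G) = 1 + 2 * int (j_G G) + (\<Sum>i\<in>UNIV. (int (card (K_sub G i)) - 1))"
proof -
  interpret dg G using assms by (rule dg.intro)
  define F where "F = {g\<in>G. fixdim g = 0}"
  define K' where "K' i = K_sub G i - {mat 1}" for i
  have m1ii: "(mat 1 :: complex^3^3)$i$i = 1" for i by (simp add: mat_def)
  have m1: "mat 1 \<in> K_sub G i" for i using one m1ii unfolding K_sub_def by blast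
  have fK: "finite (K' i)" for i using fin unfolding K'_def K_sub_def by simp
  have fF: "finite F" using fin unfolding F_def by simp
  have cK: "int (card (K_sub G i)) - 1 = int (card (K' i))" for i
  proof -
    have fi: "finite (K_sub G i)" using fin unfolding K_sub_def by simp
    have "card (K_sub G i) = Suc (card (K' i))"
      unfolding K'_def by (rule card.remove[OF fi m1])
    then show ?thesis by simp
  qed
  have GU: "G = insert (mat 1) (F \<union> (K' 1 \<union> (K' 2 \<union> K' 3)))"
  proof
    show "G \<subseteq> insert (mat 1) (F \<union> (K' 1 \<union> (K' 2 \<union> K' 3)))"
    proof
      fix g assume g: "g \<in> G"
      show "g \<in> insert (mat 1) (F \<union> (K' 1 \<union> (K' 2 \<union> K' 3)))"
      proof (cases "g = mat 1")
        case True then show ?thesis by simp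
      next
        case ne: False
        show ?thesis
        proof (cases "fixdim g = 0")
          case True
          then have "g \<in> F" using g unfolding F_def by simp
          then show ?thesis by simp
        next
          case False
          then have "\<not> (\<forall>i. g$i$i \<noteq> 1)" using fixdim0[of g] by simp
          then obtain i where i: "g$i$i = 1" by blast
          then have "g \<in> K' i" using g ne unfolding K'_def K_sub_def by simp
          then show ?thesis using exhaust_3[of i] by (elim disjE) simp_all
        qed
      qed
    qed
    show "insert (mat 1) (F \<union> (K' 1 \<union> (K' 2 \<union> K' 3))) \<subseteq> G"
      using one unfolding F_def K'_def K_sub_def by blast
  qed
  have "fixdim (mat 1 :: complex^3^3) \<noteq> 0" using fixdim0[of "mat 1"] m1ii by simp
  then have n1: "mat 1 \<notin> F \<union> (K' 1 \<union> (K' 2 \<union> K' 3))"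
    unfolding F_def K'_def by blast
  have dFK: "F \<inter> K' i = {}" for i
  proof -
    have "g \<notin> K' i" if "g \<in> F" for g
    proof -
      have "fixdim g = 0" using that unfolding F_def by simp
      then have "g$i$i \<noteq> 1" using fixdim0[of g] by simp
      then show ?thesis unfolding K'_def K_sub_def by simp
    qed
    then show ?thesis by blast
  qed
  have d1: "F \<inter> (K' 1 \<union> (K' 2 \<union> K' 3)) = {}" using dFK[of 1] dFK[of 2] dFK[of 3] by blast
  have dK: "K' i \<inter> K' j = {}" if "i \<noteq> j" for i j
  proof -
    have "g \<notin> K' j" if "g \<in> K' i" for g
    proof
      assume "g \<in> K' j"
      then have "g \<in> G" "g$j$j = 1" unfolding K'_def K_sub_def by simp_all
      moreover have "g$i$i = 1" "g \<noteq> mat 1" using that unfolding K'_def K_sub_def by simp_all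
      ultimately show False using two_ones[of g i j] \<open>i \<noteq> j\<close> by simp
    qed
    then show ?thesis by blast
  qed
  have d2: "K' 1 \<inter> (K' 2 \<union> K' 3) = {}" using dK[of 1 2] dK[of 1 3] by (simp add: Int_Un_distrib)
  have d3: "K' 2 \<inter> K' 3 = {}" using dK[of 2 3] by simp
  have c3: "card (K' 2 \<union> K' 3) = card (K' 2) + card (K' 3)"
    using card_Un_disjoint[OF fK fK d3] .
  have c2: "card (K' 1 \<union> (K' 2 \<union> K' 3)) = card (K' 1) + (card (K' 2) + card (K' 3))"
    using card_Un_disjoint[OF fK _ d2] fK c3 by simp
  have c1: "card (F \<union> (K' 1 \<union> (K' 2 \<union> K' 3))) = card F + (card (K' 1) + (card (K' 2) + card (K' 3)))"
    using card_Un_disjoint[OF fF _ d1] fK c2 by simp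
  have "card G = Suc (card F + (card (K' 1) + (card (K' 2) + card (K' 3))))"
    unfolding GU using card_insert_disjoint[OF _ n1] fF fK c1 by simp
  then show ?thesis
    unfolding sum_3 cK using card_F unfolding F_def by simp
qed

end
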